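(* Let $\|\cdot\|$ be a $C^2$ and strictly convex norm on $\mathbb{R}^2$, let $\alpha_0\in(0,\pi/2]$ be defined by $\sin(\alpha_0)=\inf_{x\in\partial B_{\|\cdot\|}(0,1)}\langle\nu_x,x/|x|\rangle$, and let $\gamma:I\to\mathbb{R}^2$ be a $\|\cdot\|$-self-contracted curve on an interval $I\subset\mathbb{R}$. Then for all $s\leq t\leq u$ in $I$, setting $x_0=\gamma(s)$, $y=\gamma(t)$, $y'=\gamma(u)$, and assuming $y\neq x_0$ and $y'\neq x_0$, $$\Big\langle\frac{y-x_0}{|y-x_0|},\frac{y'-x_0}{|y'-x_0|}\Big\rangle\geq-\cos(\alpha_0).$$
   Context: $\langle\cdot,\cdot\rangle$ and $|\cdot|$ are the Euclidean inner product and norm on $\mathbb{R}^2$. The norm $\|\cdot\|$ is $C^2$ on $\mathbb{R}^2\setminus\{0\}$ and its unit sphere $\partial B_{\|\cdot\|}(0,1)=\{\|x\|=1\}$ is a $C^2$ curve of strictly positive curvature. For $x$ on the unit sphere, $\nu_x$ is the outer Euclidean unit normal to the unit sphere at $x$. A curve $\gamma:I\to\mathbb{R}^2$ (not necessarily continuous) is $\|\cdot\|$-self-contracted if for every $[a,b]\subset I$ the function $t\mapsto\|\gamma(t)-\gamma(b)\|$ is non-increasing on $[a,b]$. *)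

theory Defs
  imports "HOL-Analysis.Analysis"
begin

text \<open>A norm on R^2 (R^2 modelled as real^2, Euclidean inner product and norm are the library ones).\<close>
definition is_norm :: "(real^2 \<Rightarrow> real) \<Rightarrow> bool" where
  "is_norm N \<longleftrightarrow> (\<forall>x. 0 \<le> N x) \<and> (\<forall>x. N x = 0 \<longleftrightarrow> x = 0)
     \<and> (\<forall>c x. N (c *\<^sub>R x) = \<bar>c\<bar> * N x) \<and> (\<forall>x y. N (x + y) \<le> N x + N y)"

text \<open>Strict convexity: the unit sphere contains no segment (midpoints of distinct unit vectors lie strictly inside).\<close>
definition strictly_convex_norm :: "(real^2 \<Rightarrow> real) \<Rightarrow> bool" where
  "strictly_convex_norm N \<longleftrightarrow>
     (\<forall>x y. N x = 1 \<longrightarrow> N y = 1 \<longrightarrow> x \<noteq> y \<longrightarrow> N ((1/2) *\<^sub>R (x + y)) < 1)"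

definition C2_on :: "(real^2) set \<Rightarrow> (real^2 \<Rightarrow> real) \<Rightarrow> bool" where
  "C2_on S f \<longleftrightarrow> (\<exists>g H. (\<forall>x\<in>S. (f has_derivative (\<lambda>h. g x \<bullet> h)) (at x))
      \<and> (\<forall>x\<in>S. (g has_derivative blinfun_apply (H x)) (at x))
      \<and> continuous_on S (H :: real^2 \<Rightarrow> ((real^2) \<Rightarrow>\<^sub>L (real^2))))"

definition grad :: "(real^2 \<Rightarrow> real) \<Rightarrow> real^2 \<Rightarrow> real^2" where
  "grad f x = (THE g. (f has_derivative (\<lambda>h. g \<bullet> h)) (at x))"

text \<open>Outer Euclidean unit normal to the unit sphere {N = 1} at x.\<close>
definition outer_normal :: "(real^2 \<Rightarrow> real) \<Rightarrow> real^2 \<Rightarrow> real^2" where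
  "outer_normal N x = (1 / norm (grad N x)) *\<^sub>R grad N x"

definition self_contracted :: "(real^2 \<Rightarrow> real) \<Rightarrow> real set \<Rightarrow> (real \<Rightarrow> real^2) \<Rightarrow> bool" where
  "self_contracted N I \<gamma> \<longleftrightarrow>
     (\<forall>a b. a \<in> I \<longrightarrow> b \<in> I \<longrightarrow> a \<le> b \<longrightarrow>
        (\<forall>t1 t2. a \<le> t1 \<longrightarrow> t1 \<le> t2 \<longrightarrow> t2 \<le> b \<longrightarrow>
           N (\<gamma> t2 - \<gamma> b) \<le> N (\<gamma> t1 - \<gamma> b)))"

end

theory Submission
  imports Defs
begin

lemma angle_aux:
  fixes a b n :: "'a::real_inner"
  assumes "norm a = 1" "norm b = 1" "norm n = 1" "a \<bullet> n \<ge> 0" "b \<bullet> n \<ge> \<sigma>" "\<sigma> \<ge> 0"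
    "c \<ge> 0" "c\<^sup>2 = 1 - \<sigma>\<^sup>2"
  shows "a \<bullet> b \<ge> - c"
proof -
  define q where "q = b \<bullet> n"
  define bp where "bp = b - q *\<^sub>R n"
  have "(norm bp)\<^sup>2 = bp \<bullet> bp" by (simp add: power2_norm_eq_inner)
  also have "\<dots> = b \<bullet> b - 2 * q * (b \<bullet> n) + q*q * (n \<bullet> n)"
    unfolding bp_def by (simp add: inner_diff_left inner_diff_right inner_commute algebra_simps)
  also have "\<dots> = 1 - q\<^sup>2" using assms(2,3) unfolding q_def
    by (simp add: power2_norm_eq_inner[symmetric] power2_eq_square)
  finally have e: "(norm bp)\<^sup>2 = 1 - q\<^sup>2" .
  have "q\<^sup>2 \<ge> \<sigma>\<^sup>2" using assms(5,6) unfolding q_def by (simp add: power_mono)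
  hence "(norm bp)\<^sup>2 \<le> c\<^sup>2" using e assms(8) by simp
  hence nb: "norm bp \<le> c" using assms(7) by (meson norm_ge_zero power2_le_imp_le)
  have "a \<bullet> b = q * (a \<bullet> n) + a \<bullet> bp" unfolding bp_def by (simp add: inner_diff_right)
  moreover have "q * (a \<bullet> n) \<ge> 0" using assms unfolding q_def by simp
  moreover have "a \<bullet> bp \<ge> - norm bp"
    using Cauchy_Schwarz_ineq2[of a bp] assms(1) by (simp add: abs_le_iff)
  ultimately show ?thesis using nb by linarith
qed

lemma line_deriv:
  fixes N :: "real^2 \<Rightarrow> real"
  assumes "(N has_derivative (\<lambda>h. g \<bullet> h)) (at z)"
  shows "((\<lambda>h. N (z + h *\<^sub>R d)) has_real_derivative (g \<bullet> d)) (at 0)"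
proof -
  have l: "((\<lambda>h::real. z + h *\<^sub>R d) has_derivative (\<lambda>h. h *\<^sub>R d)) (at 0)"
    by (auto intro!: derivative_eq_intros)
  have N0: "(N has_derivative (\<lambda>h. g \<bullet> h)) (at (z + 0 *\<^sub>R d))" using assms by simp
  have "((\<lambda>h. N (z + h *\<^sub>R d)) has_derivative (\<lambda>h. g \<bullet> (h *\<^sub>R d))) (at 0)"
    using has_derivative_compose[OF l N0] by (simp add: o_def)
  moreover have "(\<lambda>h. g \<bullet> (h *\<^sub>R d)) = (*) (g \<bullet> d)" by (rule ext) simp
  ultimately show ?thesis by (simp add: has_field_derivative_def)
qed

lemma norm_convex_deriv:
  fixes N :: "real^2 \<Rightarrow> real"
  assumes nN: "is_norm N" and D: "(N has_derivative (\<lambda>h. g \<bullet> h)) (at z)"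
    and z: "N z = 1" and w: "N w \<le> 1"
  shows "g \<bullet> (w - z) \<le> 0"
proof (rule ccontr)
  assume "\<not> ?thesis"
  hence pos: "g \<bullet> (w - z) > 0" by simp
  from DERIV_pos_inc_right[OF line_deriv[OF D, of "w - z"] pos]
  obtain \<delta> where dp: "\<delta> > 0" and dd: "\<And>h. 0 < h \<Longrightarrow> h < \<delta> \<Longrightarrow> N (z + 0 *\<^sub>R (w - z)) < N (z + (0 + h) *\<^sub>R (w - z))"
    by blast
  define h where "h = min (\<delta>/2) (1/2)"
  have h: "0 < h" "h < \<delta>" "h \<le> 1" using dp unfolding h_def by auto
  have gt: "N (z + h *\<^sub>R (w - z)) > 1" using dd[OF h(1,2)] z by simp
  have eq: "z + h *\<^sub>R (w - z) = (1 - h) *\<^sub>R z + h *\<^sub>R w" by (simp add: algebra_simps)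
  have "N ((1 - h) *\<^sub>R z + h *\<^sub>R w) \<le> N ((1 - h) *\<^sub>R z) + N (h *\<^sub>R w)"
    using nN unfolding is_norm_def by blast
  moreover have "N ((1 - h) *\<^sub>R z) = (1 - h)" using nN h z unfolding is_norm_def by simp
  moreover have "N (h *\<^sub>R w) = h * N w" using nN h unfolding is_norm_def by simp
  moreover have "h * N w \<le> h" using h w by (simp add: mult_left_le)
  ultimately have "N (z + h *\<^sub>R (w - z)) \<le> 1" unfolding eq by linarith
  thus False using gt by linarith
qed

lemma outer_normal_norm: "norm (outer_normal N x) \<le> 1"
  unfolding outer_normal_def by (cases "grad N x = 0") auto

theorem lemma3p1:
  fixes N :: "real^2 \<Rightarrow> real" and \<gamma> :: "real \<Rightarrow> real^2" and I :: "real set"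
    and \<alpha>0 s t u :: real
  assumes "is_norm N"
    and "C2_on (- {0}) N"
    and "strictly_convex_norm N"
    and "\<alpha>0 \<in> {0<..pi/2}"
    and "sin \<alpha>0 = (INF x\<in>{x. N x = 1}. outer_normal N x \<bullet> ((1 / norm x) *\<^sub>R x))"
    and "is_interval I"
    and "self_contracted N I \<gamma>"
    and "s \<in> I" and "t \<in> I" and "u \<in> I" and "s \<le> t" and "t \<le> u"
    and "\<gamma> t \<noteq> \<gamma> s" and "\<gamma> u \<noteq> \<gamma> s"
  shows "((1 / norm (\<gamma> t - \<gamma> s)) *\<^sub>R (\<gamma> t - \<gamma> s)) \<bullet>
           ((1 / norm (\<gamma> u - \<gamma> s)) *\<^sub>R (\<gamma> u - \<gamma> s)) \<ge> - cos \<alpha>0"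
proof -
  note nN = assms(1)
  from assms(2) obtain gg where gg: "\<And>x. x \<noteq> 0 \<Longrightarrow> (N has_derivative (\<lambda>h. gg x \<bullet> h)) (at x)"
    unfolding C2_on_def by blast
  have grad_eq: "grad N x = gg x" if "x \<noteq> 0" for x
    unfolding grad_def
  proof (rule the_equality)
    show "(N has_derivative (\<lambda>h. gg x \<bullet> h)) (at x)" using gg[OF that] .
    fix g assume "(N has_derivative (\<lambda>h. g \<bullet> h)) (at x)"
    from has_derivative_unique[OF this gg[OF that]]
    have hh: "\<And>h. g \<bullet> h = gg x \<bullet> h" by metis
    have "(g - gg x) \<bullet> (g - gg x) = 0" using hh[of "g - gg x"] by (simp add: inner_diff_left)
    thus "g = gg x" by simp
  qed
  define \<sigma> where "\<sigma> = sin \<alpha>0"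
  have \<alpha>: "0 < \<alpha>0" "\<alpha>0 \<le> pi/2" using assms(4) by auto
  have \<sigma>pos: "\<sigma> > 0" unfolding \<sigma>_def using \<alpha> by (intro sin_gt_zero) auto
  have cpos: "cos \<alpha>0 \<ge> 0" using \<alpha> by (intro cos_ge_zero) auto
  have csq: "(cos \<alpha>0)\<^sup>2 = 1 - \<sigma>\<^sup>2" unfolding \<sigma>_def by (simp add: cos_squared_eq)
  have bdd: "bdd_below ((\<lambda>x. outer_normal N x \<bullet> ((1 / norm x) *\<^sub>R x)) ` {x. N x = 1})"
  proof (rule bdd_belowI2[of _ "-1"])
    fix x
    have "\<bar>outer_normal N x \<bullet> ((1 / norm x) *\<^sub>R x)\<bar> \<le> norm (outer_normal N x) * norm ((1 / norm x) *\<^sub>R x)"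
      by (rule Cauchy_Schwarz_ineq2)
    also have "\<dots> \<le> 1 * 1" using outer_normal_norm[of N x]
      by (intro mult_mono) auto
    finally have A: "\<bar>outer_normal N x \<bullet> ((1 / norm x) *\<^sub>R x)\<bar> \<le> 1 * 1" .
    show "- 1 \<le> outer_normal N x \<bullet> ((1 / norm x) *\<^sub>R x)" using A by linarith
  qed
  have infle: "\<sigma> \<le> outer_normal N x \<bullet> ((1 / norm x) *\<^sub>R x)" if "N x = 1" for x
    unfolding \<sigma>_def assms(5) using that by (intro cInf_lower[OF _ bdd]) auto
  define x0 y y' where "x0 = \<gamma> s" "y = \<gamma> t" "y' = \<gamma> u"
  have sc: "N (y - y') \<le> N (x0 - y')"
  proof -
    have su: "s \<le> u" using assms(11,12) by linarith
    have "\<forall>t1 t2. s \<le> t1 \<longrightarrow> t1 \<le> t2 \<longrightarrow> t2 \<le> u \<longrightarrow> N (\<gamma> t2 - \<gamma> u) \<le> N (\<gamma> t1 - \<gamma> u)"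
      using assms(7) assms(8,10) su unfolding self_contracted_def by blast
    thus ?thesis using assms(11,12) unfolding x0_y_y'_def by simp
  qed
  define r where "r = N (x0 - y')"
  have rpos: "r > 0"
  proof -
    have "x0 - y' \<noteq> 0" using assms(14) unfolding x0_y_y'_def by simp
    hence "N (x0 - y') \<noteq> 0" "N (x0 - y') \<ge> 0" using nN unfolding is_norm_def by auto
    thus ?thesis unfolding r_def by linarith
  qed
  define z where "z = (1/r) *\<^sub>R (x0 - y')"
  define w where "w = (1/r) *\<^sub>R (y - y')"
  have hom: "\<And>c x. N (c *\<^sub>R x) = \<bar>c\<bar> * N x" using nN unfolding is_norm_def by blast
  have Nz: "N z = 1" unfolding z_def hom r_def[symmetric] using rpos by simp
  have Nw: "N w \<le> 1" unfolding w_def hom using rpos sc r_def by (simp add: divide_le_eq)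
  have z0: "z \<noteq> 0" using Nz nN unfolding is_norm_def by (metis zero_neq_one)
  define g where "g = gg z"
  have gr: "grad N z = g" using grad_eq[OF z0] g_def by simp
  have gd: "g \<bullet> (w - z) \<le> 0" using norm_convex_deriv[OF nN gg[OF z0] Nz Nw] g_def by simp
  define \<nu> where "\<nu> = outer_normal N z"
  have inf_z: "\<sigma> \<le> \<nu> \<bullet> ((1 / norm z) *\<^sub>R z)" using infle[OF Nz] \<nu>_def by simp
  have g0: "g \<noteq> 0"
  proof
    assume "g = 0"
    hence "\<nu> = 0" unfolding \<nu>_def outer_normal_def gr by simp
    thus False using inf_z \<sigma>pos by simp
  qed
  have \<nu>def: "\<nu> = (1 / norm g) *\<^sub>R g" unfolding \<nu>_def outer_normal_def gr ..
  have n1: "norm (- \<nu>) = 1" using g0 unfolding \<nu>def by simp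
  define a where "a = (1 / norm (y - x0)) *\<^sub>R (y - x0)"
  define b where "b = (1 / norm (y' - x0)) *\<^sub>R (y' - x0)"
  have yx0: "y - x0 \<noteq> 0" "y' - x0 \<noteq> 0" using assms(13,14) unfolding x0_y_y'_def by auto
  have a1: "norm a = 1" "norm b = 1" using yx0 unfolding a_def b_def by auto
  have "y - x0 = r *\<^sub>R (w - z)" unfolding w_def z_def using rpos by (simp add: algebra_simps)
  hence "g \<bullet> (y - x0) = r * (g \<bullet> (w - z))" by simp
  hence "g \<bullet> (y - x0) \<le> 0" using gd rpos by (simp add: mult_nonneg_nonpos)
  hence an: "a \<bullet> (- \<nu>) \<ge> 0" unfolding a_def \<nu>def
    by (simp add: inner_commute mult_nonneg_nonpos divide_nonpos_nonneg zero_le_divide_iff)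
  have "(1 / norm z) *\<^sub>R z = (1 / norm (x0 - y')) *\<^sub>R (x0 - y')"
    unfolding z_def using rpos by simp
  also have "\<dots> = - b" unfolding b_def by (simp add: norm_minus_commute scaleR_right_diff_distrib)
  finally have "\<sigma> \<le> b \<bullet> (- \<nu>)" using inf_z by (simp add: inner_commute)
  from angle_aux[OF a1 n1 an this less_imp_le[OF \<sigma>pos] cpos csq]
  show ?thesis unfolding a_def b_def x0_y_y'_def .
qed

end
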